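(* Let $n\ge k\ge 2$ and $r\ge 0$ be integers. Then \[ \mathsf{opt}_{\operatorname{bandit}}^{\operatorname{det}}(n,k,r)\le \frac{e}{e-1}\,k\left(\ln(n/k)+r\right)+k-1. \]
   Context: Prediction with expert advice: $\mathcal{Y}=\{1,\dots,k\}$, $\mathcal{X}=[k]^n$, experts $h_i(x)=x_i$, $i=1,\dots,n$. $\mathcal{P}_r$ is the set of finite sequences of examples in $\mathcal{X}\times\mathcal{Y}$ on which some $h_i$ errs on at most $r$ examples. Bandit feedback: each round the adversary presents $x_t$, a deterministic learner predicts $\hat y_t$ as a function of past observations and $x_t$, and learns only whether $\hat y_t$ equals the true label $y_t$. $\mathsf{opt}_{\operatorname{bandit}}^{\operatorname{det}}(n,k,r)$ is the infimum over deterministic learners of the supremum over $S\in\mathcal{P}_r$ of the number of mistakes ($\hat y_t\ne y_t$). *)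

theory Defs
  imports Complex_Main "HOL-Library.Extended_Real"
begin

text \<open>Instances are x in [k]^n, represented as lists of length n with entries in {1..k};
  labels are in {1..k}; expert i (for i < n) predicts x ! i.\<close>

definition instances :: "nat \<Rightarrow> nat \<Rightarrow> nat list set" where
  "instances n k = {x. length x = n \<and> set x \<subseteq> {1..k}}"

definition expert_errors :: "nat \<Rightarrow> (nat list \<times> nat) list \<Rightarrow> nat" where
  "expert_errors i S = length (filter (\<lambda>(x, y). x ! i \<noteq> y) S)"

definition P_r :: "nat \<Rightarrow> nat \<Rightarrow> nat \<Rightarrow> (nat list \<times> nat) list set" where
  "P_r n k r = {S. (\<forall>(x, y) \<in> set S. x \<in> instances n k \<and> y \<in> {1..k})
                  \<and> (\<exists>i<n. expert_errors i S \<le> r)}"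

text \<open>A deterministic bandit learner: maps the history of past observations
  (instance, own prediction, feedback bit "prediction was correct") and the current
  instance to a prediction.\<close>
type_synonym bandit_learner = "(nat list \<times> nat \<times> bool) list \<Rightarrow> nat list \<Rightarrow> nat"

fun bandit_mistakes_from ::
  "bandit_learner \<Rightarrow> (nat list \<times> nat \<times> bool) list \<Rightarrow> (nat list \<times> nat) list \<Rightarrow> nat" where
  "bandit_mistakes_from L h [] = 0"
| "bandit_mistakes_from L h ((x, y) # S) =
     (let p = L h x in
        (if p \<noteq> y then 1 else 0) + bandit_mistakes_from L (h @ [(x, p, p = y)]) S)"

definition bandit_mistakes :: "bandit_learner \<Rightarrow> (nat list \<times> nat) list \<Rightarrow> nat" where
  "bandit_mistakes L S = bandit_mistakes_from L [] S"

definition opt_bandit_det :: "nat \<Rightarrow> nat \<Rightarrow> nat \<Rightarrow> ereal" where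
  "opt_bandit_det n k r =
     (INF L :: bandit_learner. SUP S \<in> P_r n k r. ereal (real (bandit_mistakes L S)))"

end

theory Submission
  imports Defs
begin

definition kwr :: "nat \<Rightarrow> (nat list \<times> nat \<times> bool) \<Rightarrow> bool" where
  "kwr i o' = (case o' of (x, p, b) \<Rightarrow> (b \<and> x ! i \<noteq> p) \<or> (\<not> b \<and> x ! i = p))"

definition errc :: "(nat list \<times> nat \<times> bool) list \<Rightarrow> nat \<Rightarrow> nat" where
  "errc h i = length (filter (kwr i) h)"

definition wt :: "nat \<Rightarrow> (nat list \<times> nat \<times> bool) list \<Rightarrow> nat \<Rightarrow> real" where
  "wt r h i = (if errc h i \<le> r then exp (real r - real (errc h i)) else 0)"

definition WL :: "nat \<Rightarrow> nat \<Rightarrow> (nat list \<times> nat \<times> bool) list \<Rightarrow> nat list \<Rightarrow> nat \<Rightarrow> real" where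
  "WL n r h x l = (\<Sum>i<n. if x ! i = l then wt r h i else 0)"

definition learner :: "nat \<Rightarrow> nat \<Rightarrow> nat \<Rightarrow> bandit_learner" where
  "learner n k r h x = (SOME l. l \<in> {1..k} \<and> (\<forall>l'\<in>{1..k}. WL n r h x l' \<le> WL n r h x l))"

definition Wt :: "nat \<Rightarrow> nat \<Rightarrow> (nat list \<times> nat \<times> bool) list \<Rightarrow> real" where
  "Wt n r h = (\<Sum>i<n. wt r h i)"

definition Bn :: "nat \<Rightarrow> nat \<Rightarrow> (nat list \<times> nat \<times> bool) list \<Rightarrow> nat" where
  "Bn n r h = (\<Sum>i<n. if errc h i \<le> r then r - errc h i + 1 else 0)"

definition Phi :: "nat \<Rightarrow> nat \<Rightarrow> nat \<Rightarrow> (nat list \<times> nat \<times> bool) list \<Rightarrow> real" where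
  "Phi n k r h = (if Wt n r h \<ge> real k
     then exp 1 / (exp 1 - 1) * real k * ln (Wt n r h / real k) + real k - 1
     else real (Bn n r h) - 1)"

lemma errc_snoc: "errc (h @ [o']) i = errc h i + (if kwr i o' then 1 else 0)"
  by (simp add: errc_def)

lemma errc_Nil: "errc [] i = 0"
  by (simp add: errc_def)

lemma wt_nonneg: "0 \<le> wt r h i"
  by (simp add: wt_def)

lemma wt_snoc_le: "wt r (h @ [o']) i \<le> wt r h i"
  by (auto simp: wt_def errc_snoc)

lemma wt_snoc_kw: "kwr i o' \<Longrightarrow> wt r (h @ [o']) i \<le> wt r h i / exp 1"
  by (auto simp: wt_def errc_snoc exp_diff[symmetric] algebra_simps)

lemma wt_alive: "errc h i \<le> r \<Longrightarrow> 1 \<le> wt r h i"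
  by (simp add: wt_def)

lemma Wt_ge1: "i < n \<Longrightarrow> errc h i \<le> r \<Longrightarrow> 1 \<le> Wt n r h"
proof -
  assume a: "i < n" "errc h i \<le> r"
  have "wt r h i \<le> Wt n r h" unfolding Wt_def
    using a by (intro member_le_sum) (auto simp: wt_nonneg)
  with wt_alive[OF a(2)] show ?thesis by simp
qed

lemma Bn_le_Wt: "real (Bn n r h) \<le> Wt n r h"
  unfolding Bn_def Wt_def of_nat_sum
proof (rule sum_mono)
  fix i assume "i \<in> {..<n}"
  show "real (if errc h i \<le> r then r - errc h i + 1 else 0) \<le> wt r h i"
  proof (cases "errc h i \<le> r")
    case True
    have "1 + (real r - real (errc h i)) \<le> exp (real r - real (errc h i))"
      by (rule exp_ge_add_one_self)
    then show ?thesis using True by (simp add: wt_def of_nat_diff)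
  qed (simp add: wt_def)
qed

lemma Wt_snoc_le: "Wt n r (h @ [o']) \<le> Wt n r h"
  unfolding Wt_def by (intro sum_mono wt_snoc_le)

lemma Bn_snoc_le: "Bn n r (h @ [o']) \<le> Bn n r h"
  unfolding Bn_def by (intro sum_mono) (auto simp: errc_snoc)

lemma sum_WL:
  assumes "\<forall>i<n. x ! i \<in> {1..k}"
  shows "(\<Sum>l\<in>{1..k}. WL n r h x l) = Wt n r h"
proof -
  have "(\<Sum>l\<in>{1..k}. WL n r h x l) = (\<Sum>i<n. \<Sum>l\<in>{1..k}. if x ! i = l then wt r h i else 0)"
    unfolding WL_def by (rule sum.swap)
  also have "\<dots> = (\<Sum>i<n. wt r h i)"
    using assms by (intro sum.cong refl) (simp add: sum.delta)
  finally show ?thesis by (simp add: Wt_def)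
qed

lemma learner_spec:
  assumes "1 \<le> k"
  shows "learner n k r h x \<in> {1..k} \<and> (\<forall>l'\<in>{1..k}. WL n r h x l' \<le> WL n r h x (learner n k r h x))"
proof -
  let ?f = "WL n r h x"
  have ne: "?f ` {1..k} \<noteq> {}" using assms by auto
  obtain l where l: "l \<in> {1..k}" "?f l = Max (?f ` {1..k})"
    using Max_in[OF _ ne] by auto
  have "\<forall>l'\<in>{1..k}. ?f l' \<le> ?f l" using l by auto
  with l(1) have "\<exists>l. l \<in> {1..k} \<and> (\<forall>l'\<in>{1..k}. ?f l' \<le> ?f l)" by blast
  then show ?thesis unfolding learner_def by (rule someI_ex)
qed

lemma WL_pred_ge:
  assumes "1 \<le> k" "\<forall>i<n. x ! i \<in> {1..k}"
  shows "Wt n r h \<le> real k * WL n r h x (learner n k r h x)"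
proof -
  have "Wt n r h = (\<Sum>l\<in>{1..k}. WL n r h x l)" using sum_WL[OF assms(2)] by simp
  also have "\<dots> \<le> of_nat (card {1..k}) * WL n r h x (learner n k r h x)"
    by (rule sum_bounded_above) (use learner_spec[OF assms(1)] in auto)
  finally show ?thesis by simp
qed


lemma kwr_false: "kwr i (x, p, False) \<longleftrightarrow> x ! i = p"
  by (simp add: kwr_def)

lemma kwr_true: "kwr i (x, p, True) \<longleftrightarrow> x ! i \<noteq> p"
  by (simp add: kwr_def)

lemma Wt_mistake:
  assumes "1 \<le> k" "\<forall>i<n. x ! i \<in> {1..k}" "p = learner n k r h x"
  shows "Wt n r (h @ [(x, p, False)]) \<le> Wt n r h * (1 - (1 - 1 / exp 1) / real k)"
proof -
  let ?c = "1 - 1 / exp 1 :: real"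
  have c0: "0 \<le> ?c" using exp_ge_add_one_self[of 1] by simp
  have "Wt n r (h @ [(x, p, False)]) \<le> (\<Sum>i<n. wt r h i - ?c * (if x ! i = p then wt r h i else 0))"
    unfolding Wt_def
  proof (rule sum_mono)
    fix i assume "i \<in> {..<n}"
    show "wt r (h @ [(x, p, False)]) i \<le> wt r h i - ?c * (if x ! i = p then wt r h i else 0)"
    proof (cases "x ! i = p")
      case True
      then have "wt r (h @ [(x, p, False)]) i \<le> wt r h i / exp 1"
        by (intro wt_snoc_kw) (simp add: kwr_false)
      then show ?thesis using True by (simp add: algebra_simps)
    next
      case False
      then show ?thesis by (simp add: wt_def errc_snoc kwr_false)
    qed
  qed
  also have "\<dots> = Wt n r h - ?c * WL n r h x p"
    by (simp add: Wt_def WL_def sum_subtractf sum_distrib_left)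
  also have "\<dots> \<le> Wt n r h - ?c * (Wt n r h / real k)"
  proof -
    have "Wt n r h / real k \<le> WL n r h x p"
      using WL_pred_ge[OF assms(1,2), of r h] assms(1,3) by (simp add: field_simps)
    then have "?c * (Wt n r h / real k) \<le> ?c * WL n r h x p" using c0 by (rule mult_left_mono)
    then show ?thesis by linarith
  qed
  also have "\<dots> = Wt n r h * (1 - ?c / real k)" by (simp add: algebra_simps)
  finally show ?thesis .
qed

lemma Bn_mistake:
  assumes "1 \<le> k" "\<forall>i<n. x ! i \<in> {1..k}" "p = learner n k r h x"
    and "j < n" "errc h j \<le> r"
  shows "Bn n r (h @ [(x, p, False)]) < Bn n r h"
proof -
  have "0 < Wt n r h" using Wt_ge1[OF assms(4,5)] by simp
  moreover have "Wt n r h \<le> real k * WL n r h x p"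
    using WL_pred_ge[OF assms(1,2), of r h] assms(3) by simp
  ultimately have "0 < real k * WL n r h x p" by linarith
  then have pos: "0 < WL n r h x p" using assms(1) by (simp add: zero_less_mult_iff)
  have "\<exists>i<n. x ! i = p \<and> 0 < wt r h i"
  proof (rule ccontr)
    assume "\<not> ?thesis"
    then have "\<forall>i\<in>{..<n}. (if x ! i = p then wt r h i else 0) \<le> 0"
      by (auto simp: not_less)
    then have "WL n r h x p \<le> 0" unfolding WL_def by (intro sum_nonpos) auto
    with pos show False by simp
  qed
  then obtain i where i: "i < n" "x ! i = p" "0 < wt r h i" by blast
  then have al: "errc h i \<le> r" by (auto simp: wt_def split: if_splits)
  show ?thesis unfolding Bn_def
  proof (rule sum_strict_mono_ex1)
    show "finite {..<n}" by simp
    show "\<forall>i\<in>{..<n}. (if errc (h @ [(x, p, False)]) i \<le> r then r - errc (h @ [(x, p, False)]) i + 1 else 0)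
       \<le> (if errc h i \<le> r then r - errc h i + 1 else 0)"
      by (auto simp: errc_snoc)
    show "\<exists>i\<in>{..<n}. (if errc (h @ [(x, p, False)]) i \<le> r then r - errc (h @ [(x, p, False)]) i + 1 else 0)
       < (if errc h i \<le> r then r - errc h i + 1 else 0)"
      using i al by (intro bexI[of _ i]) (auto simp: errc_snoc kwr_false)
  qed
qed


lemma phi_abs:
  fixes W W' c :: real and B B' k d :: nat
  assumes k: "1 \<le> k" and c: "0 < c" and d: "d \<le> 1"
    and W1: "1 \<le> W'" and WW: "W' \<le> W" and BW: "real B \<le> W" and BW': "real B' \<le> W'"
    and BB: "B' + d \<le> B"
    and lnc: "real k \<le> W' \<Longrightarrow> c * real k * ln (W' / real k) + real d \<le> c * real k * ln (W / real k)"
  shows "real d + (if W' \<ge> real k then c * real k * ln (W' / real k) + real k - 1 else real B' - 1)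
     \<le> (if W \<ge> real k then c * real k * ln (W / real k) + real k - 1 else real B - 1)"
proof (cases "W' \<ge> real k")
  case True
  then have "W \<ge> real k" using WW by linarith
  then show ?thesis using True lnc by simp
next
  case False
  then have "B' < k" using BW' by simp
  then have B'k: "real B' \<le> real k - 1" by linarith
  show ?thesis
  proof (cases "W \<ge> real k")
    case True
    have "0 \<le> ln (W / real k)" using True k by simp
    then have "0 \<le> c * real k * ln (W / real k)" using c k by simp
    then show ?thesis using True False B'k d by simp
  next
    case F2: False
    then show ?thesis using False BB by simp
  qed
qed

lemma Phi_nonneg:
  assumes "1 \<le> k" "j < n" "errc h j \<le> r"
  shows "0 \<le> Phi n k r h"
proof (cases "Wt n r h \<ge> real k")
  case True
  have "0 \<le> ln (Wt n r h / real k)" using True assms(1) by simp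
  moreover have "0 < exp 1 / (exp 1 - 1 :: real)" using one_less_exp_iff[of 1] by simp
  ultimately have "0 \<le> exp 1 / (exp 1 - 1) * real k * ln (Wt n r h / real k)" by simp
  moreover have "0 \<le> real k - 1" using assms(1) by simp
  moreover have "Phi n k r h = exp 1 / (exp 1 - 1) * real k * ln (Wt n r h / real k) + real k - 1"
    unfolding Phi_def by (rule if_P[OF True])
  ultimately show ?thesis by linarith
next
  case False
  have "1 \<le> Bn n r h" unfolding Bn_def
  proof -
    have "(if errc h j \<le> r then r - errc h j + 1 else 0) \<le> (\<Sum>i<n. if errc h i \<le> r then r - errc h i + 1 else 0)"
      using assms(2) by (intro member_le_sum) auto
    then show "1 \<le> (\<Sum>i<n. if errc h i \<le> r then r - errc h i + 1 else 0)" using assms(3) by simp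
  qed
  then show ?thesis using False by (simp add: Phi_def)
qed

lemma ln_step:
  fixes W W' :: real and k :: nat
  assumes k: "1 \<le> k" and W1: "1 \<le> W'" and Wq: "W' \<le> W * (1 - (1 - 1 / exp 1) / real k)"
  shows "exp 1 / (exp 1 - 1) * real k * ln (W' / real k) + 1 \<le> exp 1 / (exp 1 - 1) * real k * ln (W / real k)"
proof -
  let ?q = "1 - (1 - 1 / exp 1) / real k"
  have e1: "1 < exp (1::real)" by simp
  have cpos: "0 < 1 - 1 / exp (1::real)" using e1 by simp
  have cle: "1 - 1 / exp (1::real) \<le> 1" by simp
  have q0: "0 < ?q"
  proof -
    have "(1 - 1 / exp 1) / real k \<le> 1 - 1 / exp 1" using k cpos by (simp add: divide_le_eq)
    moreover have "1 - 1 / exp (1::real) < 1" by simp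
    ultimately show ?thesis by linarith
  qed
  have Wpos: "0 < W" using W1 Wq q0 by (smt (verit) mult_nonpos_nonneg)
  have "ln W' \<le> ln (W * ?q)" using W1 Wq by simp
  also have "\<dots> = ln W + ln ?q" using Wpos q0 by (rule ln_mult_pos)
  also have "ln ?q \<le> ?q - 1" using q0 by (rule ln_le_minus_one)
  finally have L: "ln W' \<le> ln W - (1 - 1 / exp 1) / real k" by simp
  have kpos: "0 < real k" using k by simp
  have "ln (W' / real k) = ln W' - ln (real k)" using W1 kpos by (simp add: ln_div)
  moreover have "ln (W / real k) = ln W - ln (real k)" using Wpos kpos by (simp add: ln_div)
  moreover have "real k * ln W' \<le> real k * (ln W - (1 - 1 / exp 1) / real k)"
    using mult_left_mono[OF L] kpos by simp
  moreover have "real k * (ln W - (1 - 1 / exp 1) / real k) = real k * ln W - (1 - 1 / exp 1)"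
  proof -
    have "\<And>a b. real k * (b - a / real k) = real k * b - a" using kpos by (simp add: field_simps)
    then show ?thesis by blast
  qed
  ultimately have L2: "real k * ln (W' / real k) + (1 - 1 / exp 1) \<le> real k * ln (W / real k)"
    by (simp add: right_diff_distrib)
  have cc: "exp 1 / (exp 1 - 1) * (1 - 1 / exp 1) = (1::real)"
    using e1 by (simp add: field_simps)
  have "0 < exp 1 / (exp 1 - 1 :: real)" using e1 by simp
  from mult_left_mono[OF L2 less_imp_le[OF this]]
  have M: "exp 1 / (exp 1 - 1) * (real k * ln (W' / real k) + (1 - 1 / exp 1))
     \<le> exp 1 / (exp 1 - 1) * (real k * ln (W / real k))" .
  have E1: "exp 1 / (exp 1 - 1) * (real k * ln (W' / real k) + (1 - 1 / exp 1))
     = exp 1 / (exp 1 - 1) * real k * ln (W' / real k) + 1"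
    unfolding distrib_left cc by (simp only: mult.assoc)
  have E2: "exp 1 / (exp 1 - 1) * (real k * ln (W / real k)) = exp 1 / (exp 1 - 1) * real k * ln (W / real k)"
    by (simp only: mult.assoc)
  show ?thesis using M E1 E2 by linarith
qed


lemma Phi_step:
  assumes k1: "1 \<le> k" and xv: "\<forall>i<n. x ! i \<in> {1..k}" and p: "p = learner n k r h x"
    and j: "j < n" and ja: "errc (h @ [(x, p, p = y)]) j \<le> r"
  shows "real (if p \<noteq> y then 1 else 0) + Phi n k r (h @ [(x, p, p = y)]) \<le> Phi n k r h"
proof -
  let ?h' = "h @ [(x, p, p = y)]"
  let ?d = "(if p \<noteq> y then 1 else 0) :: nat"
  let ?c = "exp 1 / (exp 1 - 1) :: real"
  have e1: "1 < exp (1::real)" by simp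
  have c: "0 < ?c" using e1 by simp
  have ja0: "errc h j \<le> r" using ja by (simp add: errc_snoc)
  have W1: "1 \<le> Wt n r ?h'" by (rule Wt_ge1[OF j ja])
  have BB: "Bn n r ?h' + ?d \<le> Bn n r h"
  proof (cases "p = y")
    case True then show ?thesis using Bn_snoc_le by simp
  next
    case False
    then have "?h' = h @ [(x, p, False)]" by simp
    then show ?thesis using Bn_mistake[OF k1 xv p j ja0] False by simp
  qed
  have lnc: "real k * ln (Wt n r ?h' / real k) * ?c + real ?d \<le> real k * ln (Wt n r h / real k) * ?c"
    if "real k \<le> Wt n r ?h'"
  proof (cases "p = y")
    case True
    have kpos: "0 < real k" using k1 by simp
    have "Wt n r ?h' / real k \<le> Wt n r h / real k"
      using Wt_snoc_le kpos by (simp add: divide_right_mono)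
    moreover have "0 < Wt n r ?h' / real k" using W1 kpos by simp
    ultimately have "ln (Wt n r ?h' / real k) \<le> ln (Wt n r h / real k)" by simp
    then have "real k * ln (Wt n r ?h' / real k) \<le> real k * ln (Wt n r h / real k)"
      using kpos by simp
    then have "real k * ln (Wt n r ?h' / real k) * ?c \<le> real k * ln (Wt n r h / real k) * ?c"
      by (rule mult_right_mono[OF _ less_imp_le[OF c]])
    then show ?thesis using True by simp
  next
    case False
    then have h': "?h' = h @ [(x, p, False)]" by simp
    have "?c * real k * ln (Wt n r ?h' / real k) + 1 \<le> ?c * real k * ln (Wt n r h / real k)"
      using ln_step[OF k1 W1] Wt_mistake[OF k1 xv p] h' by simp
    then show ?thesis using False by (simp add: algebra_simps)
  qed
  have "real ?d + (if Wt n r ?h' \<ge> real k then ?c * real k * ln (Wt n r ?h' / real k) + real k - 1 else real (Bn n r ?h') - 1)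
     \<le> (if Wt n r h \<ge> real k then ?c * real k * ln (Wt n r h / real k) + real k - 1 else real (Bn n r h) - 1)"
    by (rule phi_abs[OF k1 c _ W1 Wt_snoc_le Bn_le_Wt Bn_le_Wt BB])
       (use lnc in \<open>auto simp: algebra_simps\<close>)
  then show ?thesis unfolding Phi_def by simp
qed

lemma main:
  assumes k1: "1 \<le> k" and Sv: "\<forall>(x, y)\<in>set S. x \<in> instances n k"
    and j: "j < n" and ja: "errc h j + expert_errors j S \<le> r"
  shows "real (bandit_mistakes_from (learner n k r) h S) \<le> Phi n k r h"
  using Sv ja
proof (induction S arbitrary: h)
  case Nil
  then show ?case using Phi_nonneg[OF k1 j, of h r] by (simp add: expert_errors_def)
next
  case (Cons a S)
  obtain x y where a: "a = (x, y)" by (cases a)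
  let ?p = "learner n k r h x"
  let ?h' = "h @ [(x, ?p, ?p = y)]"
  have xi: "x \<in> instances n k" using Cons.prems(1) a by auto
  have xv: "\<forall>i<n. x ! i \<in> {1..k}"
  proof (intro allI impI)
    fix i assume "i < n"
    then have "x ! i \<in> set x" using xi by (simp add: instances_def)
    then show "x ! i \<in> {1..k}" using xi by (auto simp: instances_def)
  qed
  have ee: "expert_errors j ((x, y) # S) = (if x ! j \<noteq> y then 1 else 0) + expert_errors j S"
    by (simp add: expert_errors_def)
  have kw: "kwr j (x, ?p, ?p = y) \<Longrightarrow> x ! j \<noteq> y" by (auto simp: kwr_def)
  have ja': "errc ?h' j + expert_errors j S \<le> r"
    using Cons.prems(2) a ee kw by (auto simp: errc_snoc split: if_splits)
  have IH: "real (bandit_mistakes_from (learner n k r) ?h' S) \<le> Phi n k r ?h'"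
    using Cons.IH[of ?h'] Cons.prems(1) ja' by auto
  have st: "real (if ?p \<noteq> y then 1 else 0) + Phi n k r ?h' \<le> Phi n k r h"
    by (rule Phi_step[OF k1 xv refl j]) (use ja' in auto)
  have "bandit_mistakes_from (learner n k r) h (a # S)
      = (if ?p \<noteq> y then 1 else 0) + bandit_mistakes_from (learner n k r) ?h' S"
    by (simp add: a Let_def)
  then show ?case using IH st by simp
qed

lemma Phi_init:
  assumes k1: "1 \<le> k" and kn: "k \<le> n"
  shows "Phi n k r [] = exp 1 / (exp 1 - 1) * real k * (ln (real n / real k) + real r) + real k - 1"
proof -
  have W: "Wt n r [] = real n * exp (real r)" by (simp add: Wt_def wt_def errc_Nil)
  have "real k \<le> real n" using kn by simp
  also have "\<dots> \<le> real n * exp (real r)" using mult_left_mono[of 1 "exp (real r)" "real n"] by simp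
  finally have ge: "real k \<le> Wt n r []" using W by simp
  have kpos: "0 < real k" and npos: "0 < real n" using k1 kn by auto
  have "ln (Wt n r [] / real k) = ln (real n / real k) + real r"
    unfolding W using kpos npos by (simp add: ln_div ln_mult_pos)
  then show ?thesis using ge unfolding Phi_def by simp
qed

theorem corollary4p3:
  fixes n k r :: nat
  assumes "2 \<le> k" and "k \<le> n"
  shows "opt_bandit_det n k r
           \<le> ereal (exp 1 / (exp 1 - 1) * real k * (ln (real n / real k) + real r) + real k - 1)"
proof -
  have k1: "1 \<le> k" using assms by simp
  let ?L = "learner n k r"
  have "(SUP S \<in> P_r n k r. ereal (real (bandit_mistakes ?L S)))
      \<le> ereal (exp 1 / (exp 1 - 1) * real k * (ln (real n / real k) + real r) + real k - 1)"
  proof (rule SUP_least)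
    fix S assume "S \<in> P_r n k r"
    then obtain j where Sv: "\<forall>(x, y)\<in>set S. x \<in> instances n k" and j: "j < n"
      and je: "expert_errors j S \<le> r"
      unfolding P_r_def by fastforce
    have "real (bandit_mistakes ?L S) \<le> Phi n k r []"
      unfolding bandit_mistakes_def
      by (rule main[OF k1 Sv j]) (use je in \<open>simp add: errc_Nil\<close>)
    then show "ereal (real (bandit_mistakes ?L S))
      \<le> ereal (exp 1 / (exp 1 - 1) * real k * (ln (real n / real k) + real r) + real k - 1)"
      using Phi_init[OF k1 assms(2)] by simp
  qed
  moreover have "opt_bandit_det n k r \<le> (SUP S \<in> P_r n k r. ereal (real (bandit_mistakes ?L S)))"
    unfolding opt_bandit_det_def by (rule INF_lower) simp
  ultimately show ?thesis by (rule order_trans[rotated])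
qed

end
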